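(* Let $n,m\ge1$, $a\in\mathbb{R}^n$ with $\|a\|=1$, $d\in\mathbb{R}^m$ with $\|d\|<1$, and $\lambda\in\mathbb{R}^n$ with $\|\lambda\|=1$ and $\lambda\neq\pm a$. Let $$H=\{(x,y)\in\mathbb{R}^{n+m} : a^\mathsf{T} x+d^\mathsf{T} y=-1\},\qquad S_{\le0}=\{(x,y)\in\mathbb{R}^{n+m}:\|x\|\le\|y\|,\ a^\mathsf{T} x+d^\mathsf{T} y\le 0\},$$ and $$C=\{(x,y)\in\mathbb{R}^{n+m} : -\lambda^\mathsf{T} x+\nabla\phi_\lambda(\beta)^\mathsf{T} y\le r(\beta)\ \text{ for all }\beta\in\mathbb{R}^m,\ \|\beta\|=1\}.$$ Then $C$ is maximal $S_{\le0}$-free with respect to $H$. Additionally, if $\lambda=\bar x/\|\bar x\|$ for some $(\bar x,\bar y)\in H$ with $\|\bar x\|>\|\bar y\|$, then $(\bar x,\bar y)\in\operatorname{int}(C)$.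
   Context: $\|\cdot\|$ is the Euclidean norm. For $y\in\mathbb{R}^m$, $\phi_\lambda(y)=\max\{\lambda^\mathsf{T} x : x\in\mathbb{R}^n,\ \|x\|\le\|y\|,\ a^\mathsf{T} x+d^\mathsf{T} y\le 0\}$; under the hypotheses this is a finite convex function differentiable on $\mathbb{R}^m\setminus\{0\}$, and $\nabla\phi_\lambda(\beta)$ denotes its gradient. For $\|\beta\|=1$, $r(\beta)=0$ if $\lambda^\mathsf{T} a+d^\mathsf{T}\beta\le0$, and otherwise $r(\beta)=\dfrac{d^\mathsf{T}\beta+\lambda^\mathsf{T} a\,\phi_\lambda(\beta)}{\phi_\lambda(\beta)+d^\mathsf{T}\beta\,\lambda^\mathsf{T} a}$. For a closed set $S$, a convex set $C$ is $S$-free if $\operatorname{int}(C)\cap S=\emptyset$. Given an affine hyperplane $H$, a closed convex $C$ is $S$-free with respect to $H$ if the interior of $C\cap H$ relative to $H$ does not meet $S\cap H$; it is maximal $S$-free with respect to $H$ if for every closed convex $C'\supseteq C$ that is $S$-free with respect to $H$, $C'\cap H\subseteq C\cap H$. *)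

theory Defs
  imports "HOL-Analysis.Analysis"
begin

definition phi :: "'n::euclidean_space \<Rightarrow> 'n \<Rightarrow> 'm::euclidean_space \<Rightarrow> 'm \<Rightarrow> real" where
  "phi lam a d y = Sup {lam \<bullet> x | x. norm x \<le> norm y \<and> a \<bullet> x + d \<bullet> y \<le> 0}"

definition grad :: "('m::euclidean_space \<Rightarrow> real) \<Rightarrow> 'm \<Rightarrow> 'm" where
  "grad f x = (SOME g. (f has_derivative (\<lambda>h. g \<bullet> h)) (at x))"

definition rfun :: "'n::euclidean_space \<Rightarrow> 'n \<Rightarrow> 'm::euclidean_space \<Rightarrow> 'm \<Rightarrow> real" where
  "rfun lam a d \<beta> =
     (if lam \<bullet> a + d \<bullet> \<beta> \<le> 0 then 0
      else (d \<bullet> \<beta> + (lam \<bullet> a) * phi lam a d \<beta>) / (phi lam a d \<beta> + (d \<bullet> \<beta>) * (lam \<bullet> a)))"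

definition S_free_wrt :: "'a::euclidean_space set \<Rightarrow> 'a set \<Rightarrow> 'a set \<Rightarrow> bool" where
  "S_free_wrt S H C \<longleftrightarrow> ((top_of_set H) interior_of (C \<inter> H)) \<inter> (S \<inter> H) = {}"

definition max_S_free_wrt :: "'a::euclidean_space set \<Rightarrow> 'a set \<Rightarrow> 'a set \<Rightarrow> bool" where
  "max_S_free_wrt S H C \<longleftrightarrow>
     closed C \<and> convex C \<and> S_free_wrt S H C \<and>
     (\<forall>C'. closed C' \<and> convex C' \<and> C \<subseteq> C' \<and> S_free_wrt S H C' \<longrightarrow> C' \<inter> H \<subseteq> C \<inter> H)"

end

theory Submission
  imports Defs
begin

lemma sq_lt: fixes s t :: real shows "\<bar>s\<bar> < t \<Longrightarrow> s^2 < t^2"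
proof -
  assume h: "\<bar>s\<bar> < t"
  have "\<not> \<bar>t\<bar> \<le> \<bar>s\<bar>" using h by linarith
  then show ?thesis unfolding abs_le_square_iff by simp
qed

lemma nu_nonneg:
  fixes c t s :: real
  assumes "c^2 < 1" "c * t > s" "t > \<bar>s\<bar>"
  shows "c * sqrt (t^2 - s^2) \<ge> sqrt (1 - c^2) * s"
proof -
  have st: "s^2 < t^2"
  proof -
    show ?thesis using assms(3) by (rule sq_lt)
  qed
  have r: "sqrt (t^2 - s^2) \<ge> 0" "sqrt (1 - c^2) \<ge> 0" using st assms(1) by auto
  have r2: "(sqrt (t^2 - s^2))^2 = t^2 - s^2" using st by simp
  have c2: "(sqrt (1 - c^2))^2 = 1 - c^2" using assms by simp
  consider "s \<le> 0" "c \<ge> 0" | "s > 0" | "s \<le> 0" "c < 0" by linarith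
  then show ?thesis
  proof cases
    case 1 then show ?thesis using r by (simp add: mult_nonneg_nonpos order_trans[of _ 0])
  next
    case 2
    have "t \<ge> 0" using assms(3) by linarith
    have "c > 0"
    proof (rule ccontr)
      assume "\<not> c > 0"
      then have "c*t \<le> 0" using \<open>t \<ge> 0\<close> by (simp add: mult_nonpos_nonneg)
      then show False using assms(2) 2 by linarith
    qed
    have "c^2 * t^2 > s^2" using assms 2 \<open>c > 0\<close>
    proof -
      have "0 \<le> s" using 2 by simp
      then have "\<bar>s\<bar> < c*t" using assms(2) by linarith
      then have "s^2 < (c*t)^2" by (rule sq_lt)
      then show ?thesis by (simp add: power_mult_distrib)
    qed
    then have "(sqrt (1 - c^2) * s)^2 \<le> (c * sqrt (t^2 - s^2))^2"
      by (simp add: power_mult_distrib r2 c2 algebra_simps)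
    then have "\<bar>sqrt (1 - c^2) * s\<bar> \<le> \<bar>c * sqrt (t^2 - s^2)\<bar>" by (simp add: abs_le_square_iff)
    then show ?thesis using \<open>c > 0\<close> r 2 by (simp add: abs_mult)
  next
    case 3
    have "(-c) * t < -s" using assms by linarith
    have "t > 0" using assms by linarith
    have "c^2 * t^2 < s^2" 
    proof -
      have "c*t \<le> 0" using 3 \<open>t>0\<close> by (intro mult_nonpos_nonneg) auto
      then have "0 \<le> (-c)*t" by simp
      then have "\<bar>c*t\<bar> < -s" using \<open>(-c) * t < -s\<close> by linarith
      then have "(c*t)^2 < (-s)^2" by (rule sq_lt)
      then show ?thesis by (simp add: power_mult_distrib)
    qed
    then have "(c * sqrt (t^2 - s^2))^2 \<le> (sqrt (1 - c^2) * s)^2"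
      by (simp add: power_mult_distrib r2 c2 algebra_simps)
    then have "\<bar>c * sqrt (t^2 - s^2)\<bar> \<le> \<bar>sqrt (1 - c^2) * s\<bar>" by (simp add: abs_le_square_iff)
    then show ?thesis using 3 r by (simp add: abs_mult mult_nonpos_nonneg)
  qed
qed

lemma deriv_squeeze:
  fixes f L U :: "'a::real_normed_vector \<Rightarrow> real"
  assumes dL: "(L has_derivative D) (at x)" and dU: "(U has_derivative D) (at x)"
    and ev: "eventually (\<lambda>y. L y \<le> f y \<and> f y \<le> U y) (at x)"
    and "L x = f x" "U x = f x"
  shows "(f has_derivative D) (at x)"
proof -
  from dL have bl: "bounded_linear D" and tL: "(\<lambda>h. norm (L (x + h) - L x - D h) / norm h) \<midarrow>0\<rightarrow> 0"
    by (auto simp: has_derivative_at)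
  from dU have tU: "(\<lambda>h. norm (U (x + h) - U x - D h) / norm h) \<midarrow>0\<rightarrow> 0"
    by (auto simp: has_derivative_at)
  have ev0: "eventually (\<lambda>h. L (x+h) \<le> f (x+h) \<and> f (x+h) \<le> U (x+h)) (at 0)"
    using ev by (simp add: eventually_at_to_0 [of _ x] add.commute)
  have "(\<lambda>h. norm (f (x + h) - f x - D h) / norm h) \<midarrow>0\<rightarrow> 0"
  proof (rule tendsto_sandwich[where f="\<lambda>h. 0" and h="\<lambda>h. norm (L (x + h) - L x - D h) / norm h + norm (U (x + h) - U x - D h) / norm h"])
    show "\<forall>\<^sub>F h in at 0. 0 \<le> norm (f (x + h) - f x - D h) / norm h" by simp
    show "\<forall>\<^sub>F h in at 0. norm (f (x + h) - f x - D h) / norm h \<le> norm (L (x + h) - L x - D h) / norm h + norm (U (x + h) - U x - D h) / norm h"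
      using ev0
    proof eventually_elim
      case (elim h)
      have "norm (f (x + h) - f x - D h) \<le> norm (L (x + h) - L x - D h) + norm (U (x + h) - U x - D h)"
        using elim assms(4,5) by auto
      then show ?case by (simp add: add_divide_distrib[symmetric] divide_right_mono)
    qed
    show "(\<lambda>h. 0) \<midarrow>0\<rightarrow> 0" by simp
    show "(\<lambda>h. norm (L (x + h) - L x - D h) / norm h + norm (U (x + h) - U x - D h) / norm h) \<midarrow>0\<rightarrow> 0"
      using tendsto_add[OF tL tU] by simp
  qed
  with bl show ?thesis by (simp add: has_derivative_at)
qed


lemma grad_eq:
  fixes f :: "'a::euclidean_space \<Rightarrow> real"
  assumes "(f has_derivative (\<lambda>h. g0 \<bullet> h)) (at x)"
  shows "grad f x = g0"
proof -
  have ex: "(f has_derivative (\<lambda>h. (grad f x) \<bullet> h)) (at x)"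
    unfolding grad_def using assms by (rule someI)
  have "(\<lambda>h. (grad f x) \<bullet> h) = (\<lambda>h. g0 \<bullet> h)" using has_derivative_unique[OF ex assms] .
  then have "(grad f x) \<bullet> (grad f x - g0) = g0 \<bullet> (grad f x - g0)" by metis
  then have "(grad f x - g0) \<bullet> (grad f x - g0) = 0" by (simp add: inner_diff_left)
  then show ?thesis by simp
qed

lemma half_aux: "(B::real) - A \<noteq> 0 \<Longrightarrow> (- A / (2 * (B - A))) * (B - A) = - A / 2"
  by (simp add: field_simps)

lemma mono_core:
  fixes a b :: real
  assumes "0 \<le> a" "a < b" "b^2 < 1"
  shows "a * sqrt (1 - b^2) < b * sqrt (1 - a^2)"
proof -
  have a2: "a^2 < b^2" using assms by (intro power_strict_mono) auto
  have "(a * sqrt (1 - b^2))^2 = a^2 * (1 - b^2)" using assms by (simp add: power_mult_distrib)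
  also have "\<dots> < b^2 * (1 - a^2)" using a2 by (simp add: algebra_simps)
  also have "\<dots> = (b * sqrt (1 - a^2))^2" using assms a2 by (simp add: power_mult_distrib)
  finally have "(a * sqrt (1 - b^2))^2 < (b * sqrt (1 - a^2))^2" .
  moreover have "0 \<le> b * sqrt (1 - a^2)" using assms a2 by simp
  ultimately show ?thesis by (rule power2_less_imp_less)
qed

lemma mono_strict:
  fixes u v :: real
  assumes "u < v" "u^2 < 1" "v^2 < 1"
  shows "u * sqrt (1 - v^2) < v * sqrt (1 - u^2)"
proof -
  have su: "sqrt (1 - u^2) > 0" and sv: "sqrt (1 - v^2) > 0" using assms by auto
  consider "0 \<le> u" | "u < 0" "0 < v" | "v \<le> 0" by linarith
  then show ?thesis
  proof cases
    case 1 then show ?thesis using mono_core assms by blast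
  next
    case 2
    have "u * sqrt (1 - v^2) < 0" using 2 sv by (simp add: mult_neg_pos)
    moreover have "0 < v * sqrt (1 - u^2)" using 2 su by simp
    ultimately show ?thesis by linarith
  next
    case 3
    have "(-v) * sqrt (1 - (-u)^2) < (-u) * sqrt (1 - (-v)^2)"
      using 3 assms by (intro mono_core) auto
    then show ?thesis by simp
  qed
qed

lemma mono_le:
  fixes u v :: real
  assumes "u \<le> v" "u^2 < 1" "v^2 < 1"
  shows "u * sqrt (1 - v^2) \<le> v * sqrt (1 - u^2)"
  using mono_strict[of u v] assms by (cases "u = v") auto

locale cdat =
  fixes a lam :: "'n::euclidean_space" and d :: "'m::euclidean_space"
  assumes na: "norm a = 1" and nd: "norm d < 1" and nl: "norm lam = 1"
    and la: "lam \<noteq> a" and lma: "lam \<noteq> - a"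
begin

definition "c = lam \<bullet> a"
definition "cc = sqrt (1 - c^2)"

lemma aa: "a \<bullet> a = 1" using na by (simp add: norm_eq_sqrt_inner)
lemma ll: "lam \<bullet> lam = 1" using nl by (simp add: norm_eq_sqrt_inner)

lemma c_sq: "c^2 < 1"
proof -
  have "\<bar>c\<bar> \<le> 1" unfolding c_def using Cauchy_Schwarz_ineq2[of lam a] na nl by simp
  moreover have "c \<noteq> 1"
  proof
    assume "c = 1"
    then have "(lam - a) \<bullet> (lam - a) = 0" using aa ll by (simp add: c_def inner_diff inner_commute)
    then show False using la by simp
  qed
  moreover have "c \<noteq> -1"
  proof
    assume "c = -1"
    then have "(lam + a) \<bullet> (lam + a) = 0" using aa ll by (simp add: c_def inner_add inner_commute)
    then show False using lma by (simp add: add_eq_0_iff2)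
  qed
  ultimately have "\<bar>c\<bar> < 1" by linarith
  then show ?thesis by (simp add: abs_square_less_1)
qed

lemma cc_pos: "cc > 0" using c_sq by (simp add: cc_def)
lemma cc_sq: "cc^2 = 1 - c^2" using c_sq by (simp add: cc_def)

lemma cal: "a \<bullet> lam = c" "lam \<bullet> a = c" by (simp_all add: c_def inner_commute)
lemma cc_sq2: "cc * cc = 1 - c * c" using cc_sq by (simp add: power2_eq_square)

definition "e = lam - c *\<^sub>R a"
lemma ae: "a \<bullet> e = 0" by (simp add: e_def inner_diff_right aa c_def inner_commute)
lemma ee: "e \<bullet> e = cc^2" by (simp add: e_def inner_diff aa ll cal cc_sq2 power2_eq_square)
lemma le: "lam \<bullet> e = cc^2" by (simp add: e_def inner_diff_right ll cal cc_sq2 power2_eq_square)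

lemma sup_formula:
  assumes st: "\<bar>s\<bar> < t"
  shows "Sup {lam \<bullet> x | x. norm x \<le> t \<and> a \<bullet> x \<le> s} =
    (if c*t \<le> s then t else c * s + cc * sqrt(t^2 - s^2))"
proof (cases "c*t \<le> s")
  case True
  have "Sup {lam \<bullet> x | x. norm x \<le> t \<and> a \<bullet> x \<le> s} = t"
  proof (rule cSup_eq_maximum)
    have "t > 0" using st by linarith
    show "t \<in> {lam \<bullet> x | x. norm x \<le> t \<and> a \<bullet> x \<le> s}"
      using True \<open>t > 0\<close> nl ll by (intro CollectI exI[of _ "t *\<^sub>R lam"]) (auto simp: c_def inner_commute mult.commute)
    fix v assume "v \<in> {lam \<bullet> x | x. norm x \<le> t \<and> a \<bullet> x \<le> s}"
    then obtain x where "v = lam \<bullet> x" "norm x \<le> t" by auto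
    then show "v \<le> t" using norm_cauchy_schwarz[of lam x] nl by simp
  qed
  then show ?thesis using True by simp
next
  case False
  define r where "r = sqrt (t^2 - s^2)"
  have s2: "s^2 < t^2" using st by (rule sq_lt)
  have rpos: "r > 0" using s2 by (simp add: r_def)
  have r2: "r^2 = t^2 - s^2" using s2 by (simp add: r_def)
  have tpos: "t > 0" using st by linarith
  define xs where "xs = s *\<^sub>R a + (r / cc) *\<^sub>R e"
  have axs: "a \<bullet> xs = s" by (simp add: xs_def inner_add_right aa ae)
  have lxs: "lam \<bullet> xs = c * s + cc * r" using cc_pos
    by (simp add: xs_def inner_add_right le c_def inner_commute power2_eq_square)
  have xsxs: "xs \<bullet> xs = t^2" using cc_pos
  proof -
    have "r * r = t * t - s * s" using r2 by (simp add: power2_eq_square)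
    then show ?thesis using cc_pos
      by (simp add: xs_def inner_add inner_commute aa ae ee power2_eq_square)
  qed
  have nxs: "norm xs = t" using xsxs tpos by (simp add: norm_eq_sqrt_inner)
  have nu: "c * r \<ge> cc * s" unfolding r_def cc_def using nu_nonneg[OF c_sq, of s t] False st by simp
  define nu where "nu = c - (cc / r) * s"
  have nu0: "nu \<ge> 0" using nu rpos by (simp add: nu_def field_simps)
  have "Sup {lam \<bullet> x | x. norm x \<le> t \<and> a \<bullet> x \<le> s} = c * s + cc * r"
  proof (rule cSup_eq_maximum)
    show "c * s + cc * r \<in> {lam \<bullet> x | x. norm x \<le> t \<and> a \<bullet> x \<le> s}"
      using nxs axs lxs by (intro CollectI exI[of _ xs]) auto
    fix v assume "v \<in> {lam \<bullet> x | x. norm x \<le> t \<and> a \<bullet> x \<le> s}"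
    then obtain x where x: "v = lam \<bullet> x" "norm x \<le> t" "a \<bullet> x \<le> s" by auto
    have ex: "e \<bullet> x = lam \<bullet> x - c * (a \<bullet> x)" by (simp add: e_def inner_diff_left)
    have xsx: "xs \<bullet> x = s * (a \<bullet> x) + (r / cc) * (e \<bullet> x)" by (simp add: xs_def inner_add_left)
    have eq: "lam \<bullet> x = (cc / r) * (xs \<bullet> x) + nu * (a \<bullet> x)"
      unfolding xsx ex nu_def using rpos cc_pos by (simp add: field_simps)
    have "xs \<bullet> x \<le> t * t" using norm_cauchy_schwarz[of xs x] nxs x(2) tpos
      by (metis mult_left_mono order_trans less_imp_le)
    then have "(cc / r) * (xs \<bullet> x) \<le> (cc / r) * (t * t)" using rpos cc_pos by (intro mult_left_mono) auto
    moreover have "nu * (a \<bullet> x) \<le> nu * s" using nu0 x(3) by (simp add: mult_left_mono)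
    ultimately have "v \<le> (cc / r) * (t * t) + nu * s" using x(1) eq by linarith
    also have "\<dots> = (cc / r) * (r * r + s * s) + nu * s" using r2 by (simp add: power2_eq_square)
    also have "\<dots> = c * s + cc * r" unfolding nu_def using rpos
      by (simp add: field_simps)
    finally show "v \<le> c * s + cc * r" .
  qed
  then show ?thesis using False by (simp add: r_def)
qed

lemma dy_lt: "y \<noteq> 0 \<Longrightarrow> \<bar>d \<bullet> y\<bar> < norm y"
proof -
  assume "y \<noteq> 0"
  have "\<bar>d \<bullet> y\<bar> \<le> norm d * norm y" by (rule Cauchy_Schwarz_ineq2)
  also have "\<dots> < norm y" using nd \<open>y \<noteq> 0\<close> by simp
  finally show ?thesis .
qed

lemma phi_eq:
  assumes "y \<noteq> 0"
  shows "phi lam a d y = (if c * norm y \<le> - (d \<bullet> y) then norm y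
           else c * (- (d \<bullet> y)) + cc * sqrt (norm y ^ 2 - (- (d \<bullet> y))^2))"
proof -
  have "{lam \<bullet> x |x. norm x \<le> norm y \<and> a \<bullet> x + d \<bullet> y \<le> 0} =
        {lam \<bullet> x |x. norm x \<le> norm y \<and> a \<bullet> x \<le> - (d \<bullet> y)}" by (auto simp: algebra_simps)
  moreover have "\<bar>- (d \<bullet> y)\<bar> < norm y" using dy_lt[OF assms] by simp
  ultimately show ?thesis unfolding phi_def using sup_formula by simp
qed

definition "fB y = - c * (d \<bullet> y) + cc * sqrt (y \<bullet> y - (d \<bullet> y)^2)"

lemma fB_alt: "fB y = c * (- (d \<bullet> y)) + cc * sqrt (norm y ^ 2 - (- (d \<bullet> y))^2)"
  by (simp add: fB_def power2_norm_eq_inner)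

lemma fB_le_norm: "y \<noteq> 0 \<Longrightarrow> fB y \<le> norm y"
proof -
  assume y: "y \<noteq> 0"
  define s where "s = - (d \<bullet> y)"
  define t where "t = norm y"
  define r where "r = sqrt (t^2 - s^2)"
  have "\<bar>s\<bar> < t" using dy_lt[OF y] by (simp add: s_def t_def)
  then have s2: "s^2 < t^2" by (rule sq_lt)
  have r2: "r^2 = t^2 - s^2" using s2 by (simp add: r_def)
  have "(c * s + cc * r)^2 \<le> (c * s + cc * r)^2 + (c * r - cc * s)^2" by simp
  also have "\<dots> = (c^2 + cc^2) * (s^2 + r^2)" by (simp add: power2_eq_square algebra_simps)
  also have "\<dots> = t^2" using cc_sq r2 by simp
  finally have "(c * s + cc * r)^2 \<le> t^2" .
  then have "\<bar>c * s + cc * r\<bar> \<le> \<bar>t\<bar>" by (simp add: abs_le_square_iff)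
  then have "c * s + cc * r \<le> t" by (simp add: t_def)
  then show ?thesis by (simp add: fB_alt s_def t_def r_def)
qed

lemma phi_A: "y \<noteq> 0 \<Longrightarrow> c * norm y \<le> - (d \<bullet> y) \<Longrightarrow> phi lam a d y = norm y"
  using phi_eq by simp
lemma phi_B: "y \<noteq> 0 \<Longrightarrow> \<not> c * norm y \<le> - (d \<bullet> y) \<Longrightarrow> phi lam a d y = fB y"
  using phi_eq fB_alt by simp
lemma phi_bounds: "y \<noteq> 0 \<Longrightarrow> fB y \<le> phi lam a d y \<and> phi lam a d y \<le> norm y"
  using phi_A phi_B fB_le_norm by (cases "c * norm y \<le> - (d \<bullet> y)") auto

definition "Sg \<beta> = sqrt (1 - (d \<bullet> \<beta>)^2)"
definition "kk \<beta> = (if c + d \<bullet> \<beta> \<le> 0 then 1 else cc / Sg \<beta>)"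
definition "mu \<beta> = (if c + d \<bullet> \<beta> \<le> 0 then 0 else c + kk \<beta> * (d \<bullet> \<beta>))"
definition "gg \<beta> = kk \<beta> *\<^sub>R \<beta> - mu \<beta> *\<^sub>R d"
definition "gB \<beta> = (cc / Sg \<beta>) *\<^sub>R \<beta> - (c + (cc / Sg \<beta>) * (d \<bullet> \<beta>)) *\<^sub>R d"

lemma sig_sq: "norm \<beta> = 1 \<Longrightarrow> (d \<bullet> \<beta>)^2 < 1"
proof -
  assume b: "norm \<beta> = 1"
  then have "\<beta> \<noteq> 0" by auto
  then show ?thesis using dy_lt[of \<beta>] b by (auto simp: abs_square_less_1)
qed

lemma Sg_pos: "norm \<beta> = 1 \<Longrightarrow> Sg \<beta> > 0"
  using sig_sq by (simp add: Sg_def)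

lemma Sg_sq: "norm \<beta> = 1 \<Longrightarrow> Sg \<beta> ^ 2 = 1 - (d \<bullet> \<beta>)^2"
  using sig_sq by (simp add: Sg_def less_imp_le)

lemma fB_deriv:
  assumes b: "norm \<beta> = 1"
  shows "(fB has_derivative (\<lambda>h. gB \<beta> \<bullet> h)) (at \<beta>)"
proof -
  have bb: "\<beta> \<bullet> \<beta> = 1" using b by (simp add: norm_eq_sqrt_inner)
  have pos: "\<beta> \<bullet> \<beta> - (d \<bullet> \<beta>)^2 > 0" using sig_sq[OF b] bb by simp
  have d1: "((\<lambda>y. y \<bullet> y) has_derivative (\<lambda>h. 2 * (\<beta> \<bullet> h))) (at \<beta>)"
    using has_derivative_inner[OF has_derivative_ident has_derivative_ident, of \<beta> UNIV]
    by (simp add: inner_commute)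
  have d2: "((\<lambda>y. d \<bullet> y) has_derivative (\<lambda>h. d \<bullet> h)) (at \<beta>)"
    by (rule has_derivative_inner_right[OF has_derivative_ident])
  have d3: "((\<lambda>y. (d \<bullet> y) * (d \<bullet> y)) has_derivative (\<lambda>h. 2 * (d \<bullet> \<beta>) * (d \<bullet> h))) (at \<beta>)"
    using has_derivative_mult[OF d2 d2] by (simp add: algebra_simps)
  have d4: "((\<lambda>y. y \<bullet> y - (d \<bullet> y) * (d \<bullet> y)) has_derivative (\<lambda>h. 2 * (\<beta> \<bullet> h) - 2 * (d \<bullet> \<beta>) * (d \<bullet> h))) (at \<beta>)"
    using has_derivative_diff[OF d1 d3] by simp
  have d5: "((\<lambda>y. sqrt (y \<bullet> y - (d \<bullet> y) * (d \<bullet> y))) has_derivative (\<lambda>h. (2 * (\<beta> \<bullet> h) - 2 * (d \<bullet> \<beta>) * (d \<bullet> h)) * (inverse (sqrt (\<beta> \<bullet> \<beta> - (d \<bullet> \<beta>) * (d \<bullet> \<beta>))) / 2))) (at \<beta>)"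
    using DERIV_compose_FDERIV[OF DERIV_real_sqrt d4] pos by (simp add: power2_eq_square)
  have d6: "(fB has_derivative (\<lambda>h. - c * (d \<bullet> h) + cc * ((2 * (\<beta> \<bullet> h) - 2 * (d \<bullet> \<beta>) * (d \<bullet> h)) * (inverse (sqrt (\<beta> \<bullet> \<beta> - (d \<bullet> \<beta>) * (d \<bullet> \<beta>))) / 2)))) (at \<beta>)"
    unfolding fB_def power2_eq_square
    using has_derivative_add[OF has_derivative_mult_right[OF d2, of "- c"] has_derivative_mult_right[OF d5, of cc]]
    by simp
  show ?thesis
  proof (rule has_derivative_eq_rhs[OF d6], rule ext)
    fix h
    have "sqrt (\<beta> \<bullet> \<beta> - (d \<bullet> \<beta>) * (d \<bullet> \<beta>)) = Sg \<beta>" using bb by (simp add: Sg_def power2_eq_square)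
    then show "- c * (d \<bullet> h) + cc * ((2 * (\<beta> \<bullet> h) - 2 * (d \<bullet> \<beta>) * (d \<bullet> h)) * (inverse (sqrt (\<beta> \<bullet> \<beta> - (d \<bullet> \<beta>) * (d \<bullet> \<beta>))) / 2)) = gB \<beta> \<bullet> h"
      using Sg_pos[OF b] by (simp add: gB_def inner_diff_left field_simps)
  qed
qed

lemma phi_deriv:
  assumes b: "norm \<beta> = 1"
  shows "(phi lam a d has_derivative (\<lambda>h. gg \<beta> \<bullet> h)) (at \<beta>)"
proof -
  have bnz: "\<beta> \<noteq> 0" using b by auto
  have lim1: "((\<lambda>y. c * norm y + d \<bullet> y) \<longlongrightarrow> c + d \<bullet> \<beta>) (at \<beta>)"
  proof -
    have "((\<lambda>y. c * norm y + d \<bullet> y) \<longlongrightarrow> c * norm \<beta> + d \<bullet> \<beta>) (at \<beta>)"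
      by (intro tendsto_intros)
    then show ?thesis using b by simp
  qed
  have evnz: "eventually (\<lambda>y. y \<noteq> 0) (at \<beta>)"
  proof -
    have "((\<lambda>y. norm y) \<longlongrightarrow> norm \<beta>) (at \<beta>)" by (intro tendsto_intros)
    then have "eventually (\<lambda>y. 0 < norm y) (at \<beta>)" using b by (intro order_tendstoD(1)) auto
    then show ?thesis by (rule eventually_mono) auto
  qed
  have nder: "(norm has_derivative (\<lambda>h. \<beta> \<bullet> h)) (at \<beta>)"
    using has_derivative_norm[OF bnz] b by (simp add: sgn_div_norm inner_commute)
  have bb: "\<beta> \<bullet> \<beta> = 1" using b by (simp add: norm_eq_sqrt_inner)
  consider "c + d \<bullet> \<beta> < 0" | "c + d \<bullet> \<beta> > 0" | "c + d \<bullet> \<beta> = 0" by linarith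
  then show ?thesis
  proof cases
    case 1
    have gg: "gg \<beta> = \<beta>" using 1 by (simp add: gg_def kk_def mu_def)
    have ev: "eventually (\<lambda>y. c * norm y + d \<bullet> y < 0) (at \<beta>)" using lim1 1 by (intro order_tendstoD(2))
    have "eventually (\<lambda>y. norm y \<le> phi lam a d y \<and> phi lam a d y \<le> norm y) (at \<beta>)"
      using ev evnz by eventually_elim (use phi_A in auto)
    moreover have "phi lam a d \<beta> = norm \<beta>" using phi_A[OF bnz] 1 b by simp
    ultimately show ?thesis using deriv_squeeze[OF nder nder] gg by auto
  next
    case 2
    have gg: "gg \<beta> = gB \<beta>" using 2 by (simp add: gg_def kk_def mu_def gB_def)
    have ev: "eventually (\<lambda>y. c * norm y + d \<bullet> y > 0) (at \<beta>)" using lim1 2 by (intro order_tendstoD(1))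
    have "eventually (\<lambda>y. fB y \<le> phi lam a d y \<and> phi lam a d y \<le> fB y) (at \<beta>)"
      using ev evnz by eventually_elim (use phi_B in auto)
    moreover have "phi lam a d \<beta> = fB \<beta>" using phi_B[OF bnz] 2 b by simp
    ultimately show ?thesis using deriv_squeeze[OF fB_deriv[OF b] fB_deriv[OF b]] gg by auto
  next
    case 3
    have "d \<bullet> \<beta> = - c" using 3 by linarith
    then have sgc: "Sg \<beta> = cc" by (simp add: Sg_def cc_def)
    have gg: "gg \<beta> = \<beta>" using 3 by (simp add: gg_def kk_def mu_def)
    have gB: "gB \<beta> = \<beta>" using 3 sgc cc_pos by (simp add: gB_def)
    have "eventually (\<lambda>y. fB y \<le> phi lam a d y \<and> phi lam a d y \<le> norm y) (at \<beta>)"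
      using evnz by eventually_elim (use phi_bounds in auto)
    moreover have "phi lam a d \<beta> = norm \<beta>" using phi_A[OF bnz] 3 b by simp
    moreover have "fB \<beta> = norm \<beta>"
    proof -
      have "fB \<beta> = - c * (d \<bullet> \<beta>) + cc * Sg \<beta>" using bb by (simp add: fB_def Sg_def)
      also have "\<dots> = c * c + cc * cc" using \<open>d \<bullet> \<beta> = - c\<close> sgc by simp
      also have "\<dots> = 1" using cc_sq2 by simp
      finally show ?thesis using b by simp
    qed
    moreover have "(fB has_derivative (\<lambda>h. \<beta> \<bullet> h)) (at \<beta>)" using fB_deriv[OF b] gB by simp
    ultimately show ?thesis using deriv_squeeze[OF _ nder] gg by auto
  qed
qed

lemma grad_phi: "norm \<beta> = 1 \<Longrightarrow> grad (phi lam a d) \<beta> = gg \<beta>"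
  using phi_deriv grad_eq by blast

lemma rfun_eq: assumes b: "norm \<beta> = 1" shows "rfun lam a d \<beta> = mu \<beta>"
proof (cases "c + d \<bullet> \<beta> \<le> 0")
  case True then show ?thesis by (simp add: rfun_def mu_def cal)
next
  case False
  have bnz: "\<beta> \<noteq> 0" using b by auto
  have ph: "phi lam a d \<beta> = - c * (d \<bullet> \<beta>) + cc * Sg \<beta>"
  proof -
    have bb: "\<beta> \<bullet> \<beta> = 1" using b by (simp add: norm_eq_sqrt_inner)
    show ?thesis using phi_B[OF bnz] False b bb by (simp add: fB_def Sg_def)
  qed
  have "(d \<bullet> \<beta> + c * phi lam a d \<beta>) / (phi lam a d \<beta> + d \<bullet> \<beta> * c) = c + (cc / Sg \<beta>) * (d \<bullet> \<beta>)"
  proof -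
    have den: "phi lam a d \<beta> + d \<bullet> \<beta> * c = cc * Sg \<beta>" using ph by simp
    have num: "d \<bullet> \<beta> + c * phi lam a d \<beta> = (d \<bullet> \<beta>) * (cc * cc) + c * cc * Sg \<beta>"
    proof -
      have "d \<bullet> \<beta> * (cc * cc) = d \<bullet> \<beta> - d \<bullet> \<beta> * c * c" by (simp add: cc_sq2 right_diff_distrib)
      then show ?thesis unfolding ph by (simp add: algebra_simps)
    qed
    show ?thesis unfolding den num using cc_pos Sg_pos[OF b] by (simp add: field_simps)
  qed
  then show ?thesis using False by (simp add: rfun_def mu_def kk_def cal)
qed

lemma caseA: "c + d \<bullet> \<beta> \<le> 0 \<Longrightarrow> kk \<beta> = 1 \<and> mu \<beta> = 0"
  by (simp add: kk_def mu_def)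
lemma caseB: "c + d \<bullet> \<beta> > 0 \<Longrightarrow> kk \<beta> = cc / Sg \<beta> \<and> mu \<beta> = c + kk \<beta> * (d \<bullet> \<beta>)"
  by (simp add: kk_def mu_def)

lemma kk_pos: "norm \<beta> = 1 \<Longrightarrow> kk \<beta> > 0"
  using Sg_pos cc_pos by (simp add: kk_def)

lemma kS: "norm \<beta> = 1 \<Longrightarrow> c + d \<bullet> \<beta> > 0 \<Longrightarrow> kk \<beta> * Sg \<beta> = cc"
  using Sg_pos[of \<beta>] by (simp add: kk_def)

lemma kdiff: "norm \<beta> = 1 \<Longrightarrow> c + d \<bullet> \<beta> \<ge> 0 \<Longrightarrow> kk \<beta> * (d \<bullet> \<beta>) = mu \<beta> - c"
  by (cases "c + d \<bullet> \<beta> \<le> 0") (simp_all add: kk_def mu_def)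

lemma kk_sq: assumes b: "norm \<beta> = 1" shows "kk \<beta> ^2 = 1 - 2 * mu \<beta> * c + mu \<beta> ^2"
proof (cases "c + d \<bullet> \<beta> \<le> 0")
  case True then show ?thesis by (simp add: kk_def mu_def)
next
  case False
  then have B: "c + d \<bullet> \<beta> > 0" by simp
  define k where "k = kk \<beta>"
  define \<sigma> where "\<sigma> = d \<bullet> \<beta>"
  have mu: "mu \<beta> = c + k * \<sigma>" using caseB[OF B] by (simp add: k_def \<sigma>_def)
  have "(k * Sg \<beta>)^2 = cc^2" using kS[OF b B] by (simp add: k_def)
  then have "k^2 * (1 - \<sigma>^2) = 1 - c^2" using Sg_sq[OF b] cc_sq by (simp add: power_mult_distrib \<sigma>_def)
  then show ?thesis unfolding mu k_def[symmetric] by (simp add: power2_eq_square algebra_simps)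
qed

lemma mu_nonneg: assumes b: "norm \<beta> = 1" shows "mu \<beta> \<ge> 0"
proof (cases "c + d \<bullet> \<beta> \<le> 0")
  case True then show ?thesis by (simp add: mu_def)
next
  case False
  have "(- (d \<bullet> \<beta>)) * sqrt (1 - c^2) < c * sqrt (1 - (- (d \<bullet> \<beta>))^2)"
    using False c_sq sig_sq[OF b] by (intro mono_strict) auto
  then have "0 < c * Sg \<beta> + cc * (d \<bullet> \<beta>)" by (simp add: Sg_def cc_def algebra_simps)
  then have "0 < (c * Sg \<beta> + cc * (d \<bullet> \<beta>)) / Sg \<beta>" using Sg_pos[OF b] by simp
  also have "\<dots> = mu \<beta>" using False Sg_pos[OF b] by (simp add: mu_def kk_def field_simps)
  finally show ?thesis by simp
qed

lemma wnorm: assumes b: "norm \<beta> = 1" shows "norm (lam - mu \<beta> *\<^sub>R a) = kk \<beta>"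
proof -
  have "(lam - mu \<beta> *\<^sub>R a) \<bullet> (lam - mu \<beta> *\<^sub>R a) = 1 - 2 * mu \<beta> * c + mu \<beta> ^2"
    by (simp add: inner_diff ll aa cal power2_eq_square algebra_simps)
  then have "norm (lam - mu \<beta> *\<^sub>R a) = sqrt (kk \<beta> ^2)" using kk_sq[OF b] by (simp add: norm_eq_sqrt_inner)
  then show ?thesis using kk_pos[OF b] by simp
qed

lemma dd: "d \<bullet> d \<le> 1"
proof -
  have "d \<bullet> d = norm d ^ 2" by (simp add: power2_norm_eq_inner)
  also have "\<dots> \<le> 1" using nd by (simp add: abs_square_le_1)
  finally show ?thesis .
qed

lemma gg_norm: assumes b: "norm \<beta> = 1" shows "norm (gg \<beta>) \<le> 1"
proof (cases "c + d \<bullet> \<beta> \<le> 0")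
  case True then show ?thesis using b by (simp add: gg_def kk_def mu_def)
next
  case False
  define k where "k = kk \<beta>"
  define m where "m = mu \<beta>"
  define \<sigma> where "\<sigma> = d \<bullet> \<beta>"
  have bb: "\<beta> \<bullet> \<beta> = 1" using b by (simp add: norm_eq_sqrt_inner)
  have kd: "k * \<sigma> = m - c" using kdiff[OF b] False by (simp add: k_def m_def \<sigma>_def)
  have ks: "k^2 = 1 - 2 * m * c + m^2" using kk_sq[OF b] by (simp add: k_def m_def)
  have "gg \<beta> \<bullet> gg \<beta> = k^2 - 2 * m * (k * \<sigma>) + m^2 * (d \<bullet> d)"
    by (simp add: gg_def k_def m_def \<sigma>_def inner_diff bb inner_commute power2_eq_square algebra_simps)
  also have "\<dots> = 1 - m^2 + m^2 * (d \<bullet> d)" unfolding kd ks by (simp add: power2_eq_square algebra_simps)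
  also have "\<dots> \<le> 1" using dd by (simp add: mult_left_le)
  finally have "gg \<beta> \<bullet> gg \<beta> \<le> 1" .
  then show ?thesis by (simp add: norm_eq_sqrt_inner)
qed

lemma MCS: assumes b: "norm \<beta> = 1" and b': "norm \<beta>' = 1"
  shows "\<beta> \<bullet> \<beta>' \<le> (d \<bullet> \<beta>) * (d \<bullet> \<beta>') + Sg \<beta> * Sg \<beta>'"
proof -
  define v where "v = Sg \<beta>' *\<^sub>R \<beta> - Sg \<beta> *\<^sub>R \<beta>'"
  have bb: "\<beta> \<bullet> \<beta> = 1" using b by (simp add: norm_eq_sqrt_inner)
  have bb': "\<beta>' \<bullet> \<beta>' = 1" using b' by (simp add: norm_eq_sqrt_inner)
  have "(d \<bullet> v)^2 \<le> (norm d * norm v)^2"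
    using Cauchy_Schwarz_ineq2[of d v] by (simp add: abs_le_square_iff[symmetric])
  also have "\<dots> \<le> (norm v)^2" using nd by (simp add: power_mult_distrib mult_left_le_one_le abs_square_le_1 mult_le_cancel_right1)
  also have "\<dots> = v \<bullet> v" by (simp add: power2_norm_eq_inner)
  finally have ineq: "(d \<bullet> v)^2 \<le> v \<bullet> v" .
  have s1: "Sg \<beta> ^2 = 1 - (d \<bullet> \<beta>)^2" using Sg_sq[OF b] .
  have s2: "Sg \<beta>' ^2 = 1 - (d \<bullet> \<beta>')^2" using Sg_sq[OF b'] .
  have "v \<bullet> v - (d \<bullet> v)^2 = 2 * (Sg \<beta>)^2 * (Sg \<beta>')^2 - 2 * Sg \<beta> * Sg \<beta>' * (\<beta> \<bullet> \<beta>' - (d \<bullet> \<beta>) * (d \<bullet> \<beta>'))"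
    unfolding v_def s1 s2 by (simp add: inner_diff inner_commute bb bb' power2_eq_square algebra_simps s1[unfolded power2_eq_square] s2[unfolded power2_eq_square])
  with ineq have "Sg \<beta> * Sg \<beta>' * (\<beta> \<bullet> \<beta>' - (d \<bullet> \<beta>) * (d \<bullet> \<beta>')) \<le> Sg \<beta> * Sg \<beta>' * (Sg \<beta> * Sg \<beta>')"
    by (simp add: power2_eq_square algebra_simps)
  then have "\<beta> \<bullet> \<beta>' - (d \<bullet> \<beta>) * (d \<bullet> \<beta>') \<le> Sg \<beta> * Sg \<beta>'"
    using Sg_pos[OF b] Sg_pos[OF b'] by (simp add: mult_le_cancel_left_pos)
  then show ?thesis by simp
qed

lemma K_AB:
  assumes b: "norm \<beta> = 1" and b': "norm \<beta>' = 1"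
    and A: "c + d \<bullet> \<beta> \<le> 0" and B: "c + d \<bullet> \<beta>' > 0"
  shows "kk \<beta>' * (\<beta> \<bullet> \<beta>') \<le> 1 - mu \<beta>' * c"
proof -
  define \<sigma> where "\<sigma> = d \<bullet> \<beta>"
  define \<sigma>' where "\<sigma>' = d \<bullet> \<beta>'"
  define S where "S = Sg \<beta>"
  define S' where "S' = Sg \<beta>'"
  define k' where "k' = kk \<beta>'"
  have Spos: "S > 0" "S' > 0" using Sg_pos[OF b] Sg_pos[OF b'] by (simp_all add: S_def S'_def)
  have kpos: "k' > 0" using kk_pos[OF b'] by (simp add: k'_def)
  have kS': "k' * S' = cc" using kS[OF b' B] by (simp add: k'_def S'_def)
  have mu': "mu \<beta>' = c + k' * \<sigma>'" using caseB[OF B] by (simp add: k'_def \<sigma>'_def)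
  have SS: "S^2 = 1 - \<sigma>^2" using Sg_sq[OF b] by (simp add: S_def \<sigma>_def)
  have s2: "\<sigma>^2 < 1" "\<sigma>'^2 < 1" using sig_sq[OF b] sig_sq[OF b'] by (simp_all add: \<sigma>_def \<sigma>'_def)
  have m1: "\<sigma> * S' \<le> \<sigma>' * S"
    using mono_le[of \<sigma> \<sigma>'] s2 A B by (simp add: S_def S'_def Sg_def \<sigma>_def \<sigma>'_def)
  have m2: "(- c) * S' \<le> \<sigma>' * cc"
    using mono_le[of "- c" \<sigma>'] s2 c_sq B by (simp add: S'_def Sg_def \<sigma>'_def cc_def)
  have br: "S' * (\<sigma> - c) - \<sigma>' * (cc + S) \<le> 0" using m1 m2 by (simp add: algebra_simps)
  have sc: "\<sigma> + c \<le> 0" using A by (simp add: \<sigma>_def)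
  have "(cc + S) * (S' * (cc - S) - \<sigma>' * (\<sigma> + c)) = (\<sigma> + c) * (S' * (\<sigma> - c) - \<sigma>' * (cc + S))"
  proof -
    have "(cc + S) * (cc - S) = cc^2 - S^2" by (simp add: power2_eq_square algebra_simps)
    also have "\<dots> = \<sigma>^2 - c^2" using SS cc_sq by simp
    finally have h: "(cc + S) * (cc - S) = (\<sigma> + c) * (\<sigma> - c)" by (simp add: power2_eq_square algebra_simps)
    have "(cc + S) * (S' * (cc - S) - \<sigma>' * (\<sigma> + c)) = S' * ((cc + S) * (cc - S)) - \<sigma>' * (\<sigma> + c) * (cc + S)"
      by (simp add: algebra_simps)
    also have "\<dots> = S' * ((\<sigma> + c) * (\<sigma> - c)) - \<sigma>' * (\<sigma> + c) * (cc + S)" unfolding h ..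
    also have "\<dots> = (\<sigma> + c) * (S' * (\<sigma> - c) - \<sigma>' * (cc + S))" by (simp add: algebra_simps)
    finally show ?thesis .
  qed
  also have "\<dots> \<ge> 0" using br sc by (simp add: mult_nonpos_nonpos)
  finally have "0 \<le> (cc + S) * (S' * (cc - S) - \<sigma>' * (\<sigma> + c))" .
  moreover have "cc + S > 0" using Spos cc_pos by simp
  ultimately have X: "0 \<le> S' * (cc - S) - \<sigma>' * (\<sigma> + c)"
    unfolding zero_le_mult_iff by linarith
  then have core: "\<sigma>' * (\<sigma> + c) + S * S' \<le> cc * S'"
    by (simp add: algebra_simps)
  have "kk \<beta>' * (\<beta> \<bullet> \<beta>') \<le> k' * (\<sigma> * \<sigma>' + S * S')"
    using MCS[OF b b'] kpos by (simp add: k'_def \<sigma>_def \<sigma>'_def S_def S'_def mult_left_mono)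
  also have "\<dots> \<le> 1 - mu \<beta>' * c"
  proof -
    have "k' * (\<sigma>' * (\<sigma> + c) + S * S') \<le> k' * (cc * S')" using core kpos by (simp add: mult_left_mono)
    also have "\<dots> = cc * cc" using kS' by (simp add: algebra_simps)
    also have "\<dots> = 1 - c * c" by (rule cc_sq2)
    finally show ?thesis unfolding mu' by (simp add: algebra_simps)
  qed
  finally show ?thesis .
qed

lemma K5:
  assumes b: "norm \<beta> = 1" and b': "norm \<beta>' = 1"
  shows "kk \<beta> * kk \<beta>' * (\<beta> \<bullet> \<beta>') \<le> 1 - (mu \<beta> + mu \<beta>') * c + mu \<beta> * mu \<beta>'"
proof (cases "c + d \<bullet> \<beta> \<le> 0")
  case A: True
  show ?thesis
  proof (cases "c + d \<bullet> \<beta>' \<le> 0")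
    case True
    have "\<beta> \<bullet> \<beta>' \<le> 1" using norm_cauchy_schwarz[of \<beta> \<beta>'] b b' by simp
    then show ?thesis using A True by (simp add: kk_def mu_def)
  next
    case False
    then show ?thesis using K_AB[OF b b' A] A by (simp add: kk_def mu_def)
  qed
next
  case B: False
  show ?thesis
  proof (cases "c + d \<bullet> \<beta>' \<le> 0")
    case True
    then show ?thesis using K_AB[OF b' b True] B by (simp add: kk_def mu_def inner_commute)
  next
    case B': False
    define k where "k = kk \<beta>"
    define k' where "k' = kk \<beta>'"
    have kpos: "k > 0" "k' > 0" using kk_pos[OF b] kk_pos[OF b'] by (simp_all add: k_def k'_def)
    have kd: "k * (d \<bullet> \<beta>) = mu \<beta> - c" using kdiff[OF b] B by (simp add: k_def)
    have kd': "k' * (d \<bullet> \<beta>') = mu \<beta>' - c" using kdiff[OF b'] B' by (simp add: k'_def)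
    have kS1: "k * Sg \<beta> = cc" using kS[OF b] B by (simp add: k_def)
    have kS2: "k' * Sg \<beta>' = cc" using kS[OF b'] B' by (simp add: k'_def)
    have "k * k' * (\<beta> \<bullet> \<beta>') \<le> k * k' * ((d \<bullet> \<beta>) * (d \<bullet> \<beta>') + Sg \<beta> * Sg \<beta>')"
      using MCS[OF b b'] kpos by (simp add: mult_left_mono)
    also have "\<dots> = (k * (d \<bullet> \<beta>)) * (k' * (d \<bullet> \<beta>')) + (k * Sg \<beta>) * (k' * Sg \<beta>')"
      by (simp add: algebra_simps)
    also have "\<dots> = (mu \<beta> - c) * (mu \<beta>' - c) + cc * cc" unfolding kd kd' kS1 kS2 ..
    also have "\<dots> = 1 - (mu \<beta> + mu \<beta>') * c + mu \<beta> * mu \<beta>'" using cc_sq2 by (simp add: algebra_simps)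
    finally show ?thesis by (simp add: k_def k'_def)
  qed
qed

definition "Cs = {(x, y). \<forall>\<beta>. norm \<beta> = 1 \<longrightarrow> - (lam \<bullet> x) + gg \<beta> \<bullet> y \<le> mu \<beta>}"
definition "Hs = {(x :: 'n, y :: 'm). a \<bullet> x + d \<bullet> y = -1}"
definition "Ss = {(x :: 'n, y :: 'm). norm x \<le> norm y \<and> a \<bullet> x + d \<bullet> y \<le> 0}"

lemma Cs_INT: "Cs = (\<Inter>\<beta>\<in>{\<beta>. norm \<beta> = 1}. {p. (- lam, gg \<beta>) \<bullet> p \<le> mu \<beta>})"
  by (auto simp: Cs_def)

lemma Cs_closed: "closed Cs"
  unfolding Cs_INT by (intro closed_INT ballI closed_halfspace_le)

lemma Cs_convex: "convex Cs"
  unfolding Cs_INT by (intro convex_INT ballI convex_halfspace_le)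

lemma int_pt:
  assumes pos: "lam \<bullet> x - norm y > 0"
  shows "(x, y) \<in> interior Cs"
proof -
  define \<delta> where "\<delta> = lam \<bullet> x - norm y"
  have "ball (x, y) (\<delta> / 2) \<subseteq> Cs"
  proof
    fix p assume "p \<in> ball (x, y) (\<delta> / 2)"
    obtain x' y' where p: "p = (x', y')" by (cases p)
    have dist: "norm ((x, y) - (x', y')) < \<delta> / 2" using \<open>p \<in> ball (x, y) (\<delta> / 2)\<close> p by (simp add: dist_norm)
    have dx0: "norm (x - x') < \<delta> / 2" using dist norm_fst_le[of "x - x'" "y - y'"] by simp
    have dy0: "norm (y - y') < \<delta> / 2" using dist norm_snd_le[of "y - y'" "x - x'"] by simp
    have dx: "norm (x' - x) < \<delta> / 2" using dx0 by (simp add: norm_minus_commute)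
    have dy: "norm (y' - y) < \<delta> / 2" using dy0 by (simp add: norm_minus_commute)
    show "p \<in> Cs" unfolding p Cs_def mem_Collect_eq case_prod_conv
    proof (intro allI impI)
      fix \<beta> :: 'm assume b: "norm \<beta> = 1"
      have "- (lam \<bullet> x') = - (lam \<bullet> x) + lam \<bullet> (x - x')" by (simp add: inner_diff_right)
      also have "\<dots> \<le> - (lam \<bullet> x) + norm (x' - x)"
        using norm_cauchy_schwarz[of lam "x - x'"] nl by (simp add: norm_minus_commute)
      finally have 1: "- (lam \<bullet> x') \<le> - (lam \<bullet> x) + norm (x' - x)" .
      have "gg \<beta> \<bullet> y' = gg \<beta> \<bullet> y + gg \<beta> \<bullet> (y' - y)" by (simp add: inner_diff_right)
      also have "\<dots> \<le> norm y + norm (y' - y)"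
      proof -
        have "gg \<beta> \<bullet> y \<le> norm (gg \<beta>) * norm y" by (rule norm_cauchy_schwarz)
        also have "\<dots> \<le> norm y" using gg_norm[OF b] by (simp add: mult_left_le_one_le)
        finally have "gg \<beta> \<bullet> y \<le> norm y" .
        moreover have "gg \<beta> \<bullet> (y' - y) \<le> norm (gg \<beta>) * norm (y' - y)" by (rule norm_cauchy_schwarz)
        moreover have "norm (gg \<beta>) * norm (y' - y) \<le> norm (y' - y)" using gg_norm[OF b] by (simp add: mult_left_le_one_le)
        ultimately show ?thesis by linarith
      qed
      finally have 2: "gg \<beta> \<bullet> y' \<le> norm y + norm (y' - y)" .
      have "0 \<le> mu \<beta>" using mu_nonneg[OF b] .
      then show "- (lam \<bullet> x') + gg \<beta> \<bullet> y' \<le> mu \<beta>" using 1 2 dx dy by (simp add: \<delta>_def)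
    qed
  qed
  moreover have "\<delta> / 2 > 0" using pos by (simp add: \<delta>_def)
  ultimately show ?thesis by (meson centre_in_ball interior_maximal open_ball subsetD) 
qed

definition "x0 = - a + (2 / cc^2) *\<^sub>R e"

lemma q0: "(x0, 0) \<in> Hs" "(x0, 0) \<in> interior Cs" "lam \<bullet> x0 > 0"
proof -
  have "a \<bullet> x0 = -1" by (simp add: x0_def inner_add_right inner_diff_right aa ae)
  then show "(x0, 0) \<in> Hs" by (simp add: Hs_def)
  have "lam \<bullet> x0 = 2 - c" using cc_pos by (simp add: x0_def inner_add_right inner_diff_right le cal)
  moreover have "\<bar>c\<bar> < 1" using c_sq by (simp add: abs_square_less_1)
  ultimately show "lam \<bullet> x0 > 0" by linarith
  then show "(x0, 0) \<in> interior Cs" by (intro int_pt) simp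
qed

lemma core_free:
  assumes H: "a \<bullet> x + d \<bullet> y = -1" and n: "norm x \<le> norm y" and y: "y \<noteq> 0"
  defines "\<beta> \<equiv> y /\<^sub>R norm y"
  shows "norm \<beta> = 1" "- (lam \<bullet> x) + gg \<beta> \<bullet> y \<ge> mu \<beta>"
proof -
  show b: "norm \<beta> = 1" using y by (simp add: \<beta>_def)
  have byy: "\<beta> \<bullet> y = norm y" using y by (simp add: \<beta>_def power2_norm_eq_inner[symmetric] power2_eq_square)
  have "(lam - mu \<beta> *\<^sub>R a) \<bullet> x \<le> norm (lam - mu \<beta> *\<^sub>R a) * norm x" by (rule norm_cauchy_schwarz)
  also have "\<dots> = kk \<beta> * norm x" using wnorm[OF b] by simp
  also have "\<dots> \<le> kk \<beta> * norm y" using n kk_pos[OF b] by (simp add: mult_left_mono)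
  finally have i: "(lam - mu \<beta> *\<^sub>R a) \<bullet> x \<le> kk \<beta> * norm y" .
  have "gg \<beta> \<bullet> y = kk \<beta> * norm y - mu \<beta> * (d \<bullet> y)" by (simp add: gg_def inner_diff_left byy)
  also have "\<dots> = kk \<beta> * norm y + mu \<beta> * (1 + a \<bullet> x)"
  proof -
    have "d \<bullet> y = - 1 - a \<bullet> x" using H by linarith
    show ?thesis by (subst \<open>d \<bullet> y = - 1 - a \<bullet> x\<close>) (simp add: algebra_simps)
  qed
  finally show "- (lam \<bullet> x) + gg \<beta> \<bullet> y \<ge> mu \<beta>" using i by (simp add: inner_diff_left algebra_simps)
qed

lemma Cs_free: "S_free_wrt Ss Hs Cs"
  unfolding S_free_wrt_def
proof (rule ccontr)
  assume "(top_of_set Hs interior_of (Cs \<inter> Hs)) \<inter> (Ss \<inter> Hs) \<noteq> {}"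
  then obtain p where p1: "p \<in> top_of_set Hs interior_of (Cs \<inter> Hs)" and p2: "p \<in> Ss" "p \<in> Hs" by blast
  from p1 obtain T where T: "openin (top_of_set Hs) T" "p \<in> T" "T \<subseteq> Cs \<inter> Hs"
    unfolding interior_of_def by blast
  from T(1) obtain U where U: "open U" "T = Hs \<inter> U" by (auto simp: openin_open)
  obtain \<epsilon> where eps: "\<epsilon> > 0" "ball p \<epsilon> \<subseteq> U" using U T(2) open_contains_ball by blast
  obtain x y where p: "p = (x, y)" by (cases p)
  have H: "a \<bullet> x + d \<bullet> y = -1" using p2 p by (simp add: Hs_def)
  have n: "norm x \<le> norm y" using p2 p by (simp add: Ss_def)
  have y: "y \<noteq> 0"
  proof
    assume "y = 0"
    then have "x = 0" using n by simp
    then show False using H \<open>y = 0\<close> by simp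
  qed
  define \<beta> where "\<beta> = y /\<^sub>R norm y"
  have b: "norm \<beta> = 1" and cf: "- (lam \<bullet> x) + gg \<beta> \<bullet> y \<ge> mu \<beta>"
    using core_free[OF H n y] by (simp_all add: \<beta>_def)
  define t where "t = \<epsilon> / (2 * (norm e + 1))"
  have ne: "2 * (norm e + 1) > 0" by (simp add: add_nonneg_pos)
  have tpos: "t > 0" using eps ne unfolding t_def by (intro divide_pos_pos)
  have "t * norm e < \<epsilon>"
  proof -
    have "t * norm e \<le> t * (norm e + 1)" using tpos by simp
    also have "\<dots> = \<epsilon> / 2"
    proof -
      have "norm e + 1 > 0" by (simp add: add_nonneg_pos)
      then show ?thesis unfolding t_def by (simp add: field_simps)
    qed
    finally show ?thesis using eps by simp
  qed
  then have "(x - t *\<^sub>R e, y) \<in> ball p \<epsilon>" using tpos by (simp add: p dist_norm)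
  moreover have "(x - t *\<^sub>R e, y) \<in> Hs" using H by (simp add: Hs_def inner_diff_right ae)
  ultimately have "(x - t *\<^sub>R e, y) \<in> Cs" using eps U T by blast
  then have "- (lam \<bullet> (x - t *\<^sub>R e)) + gg \<beta> \<bullet> y \<le> mu \<beta>" using b by (simp add: Cs_def)
  then have "- (lam \<bullet> x) + t * cc^2 + gg \<beta> \<bullet> y \<le> mu \<beta>" by (simp add: inner_diff_right le)
  with cf have "t * cc^2 \<le> 0" by linarith
  moreover have "t * cc^2 > 0" using tpos cc_pos by simp
  ultimately show False by linarith
qed

definition "Dx \<beta> = (1 / kk \<beta>) *\<^sub>R (lam - mu \<beta> *\<^sub>R a)"

lemma rec_B:
  assumes b: "norm \<beta> = 1" and B: "c + d \<bullet> \<beta> \<ge> 0" and b': "norm \<beta>' = 1"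
  shows "- (lam \<bullet> Dx \<beta>) + gg \<beta>' \<bullet> \<beta> \<le> 0"
proof -
  define k where "k = kk \<beta>"
  define m where "m = mu \<beta>"
  have kpos: "k > 0" using kk_pos[OF b] by (simp add: k_def)
  have kd: "k * (d \<bullet> \<beta>) = m - c" using kdiff[OF b B] by (simp add: k_def m_def)
  have K: "k * kk \<beta>' * (\<beta> \<bullet> \<beta>') \<le> 1 - (m + mu \<beta>') * c + m * mu \<beta>'"
    using K5[OF b b'] by (simp add: k_def m_def)
  have "k * (- (lam \<bullet> Dx \<beta>) + gg \<beta>' \<bullet> \<beta>) = - (1 - m * c) + k * kk \<beta>' * (\<beta> \<bullet> \<beta>') - mu \<beta>' * (k * (d \<bullet> \<beta>))"
    using kpos by (simp add: Dx_def gg_def k_def[symmetric] m_def[symmetric] inner_diff_right inner_diff_left ll cal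
        inner_commute algebra_simps)
  also have "\<dots> \<le> 0" unfolding kd using K by (simp add: algebra_simps)
  finally show ?thesis using kpos by (simp add: mult_le_0_iff)
qed

lemma Dx_H: "norm \<beta> = 1 \<Longrightarrow> c + d \<bullet> \<beta> \<ge> 0 \<Longrightarrow> a \<bullet> Dx \<beta> + d \<bullet> \<beta> = 0"
proof -
  assume b: "norm \<beta> = 1" and B: "c + d \<bullet> \<beta> \<ge> 0"
  have kpos: "kk \<beta> > 0" using kk_pos[OF b] .
  have kd: "kk \<beta> * (d \<bullet> \<beta>) = mu \<beta> - c" using kdiff[OF b B] .
  have "a \<bullet> Dx \<beta> = (c - mu \<beta>) / kk \<beta>" by (simp add: Dx_def inner_diff_right aa cal)
  also have "\<dots> = - (d \<bullet> \<beta>)" using kpos kd by (simp add: field_simps)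
  finally show ?thesis by simp
qed

lemma Dx_norm: "norm \<beta> = 1 \<Longrightarrow> Dx \<beta> \<bullet> Dx \<beta> = 1"
proof -
  assume b: "norm \<beta> = 1"
  have "norm (Dx \<beta>) = 1" using wnorm[OF b] kk_pos[OF b] by (simp add: Dx_def)
  then show ?thesis by (simp add: norm_eq_sqrt_inner)
qed

lemma A_in:
  assumes b: "norm \<beta> = 1" and A: "c + d \<bullet> \<beta> < 0"
  shows "((1 / (- (c + d \<bullet> \<beta>))) *\<^sub>R lam, (1 / (- (c + d \<bullet> \<beta>))) *\<^sub>R \<beta>) \<in> Cs"
  unfolding Cs_def mem_Collect_eq case_prod_conv
proof (intro allI impI)
  fix \<beta>' :: 'm assume b': "norm \<beta>' = 1"
  define g where "g = - (c + d \<bullet> \<beta>)"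
  have gpos: "g > 0" using A by (simp add: g_def)
  have K: "kk \<beta>' * (\<beta> \<bullet> \<beta>') \<le> 1 - mu \<beta>' * c"
    using K5[OF b b'] A by (simp add: kk_def mu_def)
  have "g * (- (lam \<bullet> ((1 / g) *\<^sub>R lam)) + gg \<beta>' \<bullet> ((1 / g) *\<^sub>R \<beta>)) = - 1 + kk \<beta>' * (\<beta> \<bullet> \<beta>') - mu \<beta>' * (d \<bullet> \<beta>)"
    using gpos by (simp add: gg_def inner_diff_left ll inner_commute algebra_simps)
  also have "\<dots> \<le> g * mu \<beta>'" using K by (simp add: g_def algebra_simps)
  finally have "- (lam \<bullet> ((1 / g) *\<^sub>R lam)) + gg \<beta>' \<bullet> ((1 / g) *\<^sub>R \<beta>) \<le> mu \<beta>'"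
    using gpos by (simp add: mult_le_cancel_left_pos)
  then show "- (lam \<bullet> ((1 / - (c + d \<bullet> \<beta>)) *\<^sub>R lam)) + gg \<beta>' \<bullet> ((1 / - (c + d \<bullet> \<beta>)) *\<^sub>R \<beta>) \<le> mu \<beta>'"
    by (simp add: g_def)
qed

lemma norm_lt_inner: "u \<bullet> u < v \<bullet> v \<Longrightarrow> norm u < norm v"
  by (simp add: norm_eq_sqrt_inner)

lemma rec_int:
  assumes b: "norm \<beta> = 1" and B: "c + d \<bullet> \<beta> \<ge> 0" and q: "q \<in> interior Cs" and t: "\<tau> \<ge> 0"
  shows "q + \<tau> *\<^sub>R (Dx \<beta>, \<beta>) \<in> interior Cs"
proof -
  define v where "v = \<tau> *\<^sub>R (Dx \<beta>, \<beta>)"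
  have recs: "p + v \<in> Cs" if "p \<in> Cs" for p
  proof -
    obtain x y where p: "p = (x, y)" by (cases p)
    have pv: "p + v = (x + \<tau> *\<^sub>R Dx \<beta>, y + \<tau> *\<^sub>R \<beta>)" by (simp add: p v_def)
    show ?thesis unfolding pv Cs_def mem_Collect_eq case_prod_conv
    proof (intro allI impI)
      fix \<beta>' :: 'm assume b': "norm \<beta>' = 1"
      have "- (lam \<bullet> x) + gg \<beta>' \<bullet> y \<le> mu \<beta>'" using that b' by (simp add: p Cs_def)
      moreover have "\<tau> * (- (lam \<bullet> Dx \<beta>) + gg \<beta>' \<bullet> \<beta>) \<le> 0"
        using rec_B[OF b B b'] t by (simp add: mult_nonneg_nonpos)
      ultimately show "- (lam \<bullet> (x + \<tau> *\<^sub>R Dx \<beta>)) + gg \<beta>' \<bullet> (y + \<tau> *\<^sub>R \<beta>) \<le> mu \<beta>'"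
        by (simp add: inner_add_right algebra_simps)
    qed
  qed
  from q obtain \<epsilon> where eps: "\<epsilon> > 0" "ball q \<epsilon> \<subseteq> Cs" by (auto simp: mem_interior)
  have "ball (q + v) \<epsilon> \<subseteq> Cs"
  proof
    fix p assume "p \<in> ball (q + v) \<epsilon>"
    then have "p - v \<in> ball q \<epsilon>" by (simp add: dist_norm algebra_simps)
    then have "p - v \<in> Cs" using eps by blast
    from recs[OF this] show "p \<in> Cs" by simp
  qed
  then show ?thesis using eps by (auto simp: mem_interior v_def)
qed

lemma max_main:
  assumes cv: "convex C'" and sub: "Cs \<subseteq> C'" and zC: "z \<in> C'" and zH: "z \<in> Hs" and zn: "z \<notin> Cs"
  shows "\<exists>s. s \<in> interior C' \<and> s \<in> Hs \<and> norm (fst s) < norm (snd s)"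
proof -
  obtain zx zy where z: "z = (zx, zy)" by (cases z)
  from zn obtain \<beta> where b: "norm \<beta> = 1" and viol: "- (lam \<bullet> zx) + gg \<beta> \<bullet> zy > mu \<beta>"
    by (auto simp: Cs_def z not_le)
  define m where "m = mu \<beta>"
  define sl where "sl = (\<lambda>x y. m + lam \<bullet> x - gg \<beta> \<bullet> y)"
  have slz: "sl zx zy < 0" using viol by (simp add: sl_def m_def)
  have sl0: "sl x0 0 > 0" using q0(3) mu_nonneg[OF b] by (simp add: sl_def m_def)
  define \<eta> where "\<eta> = - sl zx zy / (2 * (sl x0 0 - sl zx zy))"
  have eta: "0 < \<eta>" "\<eta> \<le> 1" using slz sl0 by (simp_all add: \<eta>_def field_simps)
  define Ex where "Ex = (1 - \<eta>) *\<^sub>R zx + \<eta> *\<^sub>R x0"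
  define Ey where "Ey = (1 - \<eta>) *\<^sub>R zy"
  have slE: "sl Ex Ey = sl zx zy / 2"
  proof -
    have "sl Ex Ey = (1 - \<eta>) * sl zx zy + \<eta> * sl x0 0"
      by (simp add: sl_def Ex_def Ey_def inner_add_right algebra_simps)
    also have "\<dots> = sl zx zy + \<eta> * (sl x0 0 - sl zx zy)" by (simp add: algebra_simps)
    also have "\<eta> * (sl x0 0 - sl zx zy) = - sl zx zy / 2" unfolding \<eta>_def using slz sl0 by (intro half_aux) simp
    also have "sl zx zy + - sl zx zy / 2 = sl zx zy / 2" by simp
    finally show ?thesis .
  qed
  have Hz: "a \<bullet> zx + d \<bullet> zy = -1" using zH by (simp add: z Hs_def)
  have H0: "a \<bullet> x0 = -1" using q0(1) by (simp add: Hs_def)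
  have HE: "a \<bullet> Ex + d \<bullet> Ey = -1"
  proof -
    have "a \<bullet> Ex + d \<bullet> Ey = (1 - \<eta>) * (a \<bullet> zx + d \<bullet> zy) + \<eta> * (a \<bullet> x0)"
      by (simp add: Ex_def Ey_def inner_add_right algebra_simps)
    then show ?thesis using Hz H0 by simp
  qed
  have q0C': "(x0, 0) \<in> interior C'" using q0(2) interior_mono[OF sub] by blast
  have z'int: "(Ex, Ey) \<in> interior C'"
  proof -
    have "z - \<eta> *\<^sub>R (z - (x0, 0)) \<in> interior C'"
      using mem_interior_convex_shrink[OF cv q0C' zC eta(1) eta(2)] .
    moreover have "z - \<eta> *\<^sub>R (z - (x0, 0)) = (Ex, Ey)" by (simp add: z Ex_def Ey_def algebra_simps)
    ultimately show ?thesis by simp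
  qed
  define NE where "NE = Ex \<bullet> Ex - Ey \<bullet> Ey"
  show ?thesis
  proof (cases "c + d \<bullet> \<beta> < 0")
    case True
    define g where "g = - (c + d \<bullet> \<beta>)"
    have gpos: "g > 0" using True by (simp add: g_def)
    have mu0: "m = 0" and gg: "gg \<beta> = \<beta>" using True by (simp_all add: m_def mu_def gg_def kk_def)
    define p0 where "p0 = ((1 / g) *\<^sub>R lam, (1 / g) *\<^sub>R \<beta>)"
    have p0C: "p0 \<in> C'" using A_in[OF b True] sub by (auto simp: p0_def g_def)
    define A where "A = - sl Ex Ey / g"
    have "sl Ex Ey < 0" using slE slz by simp
    then have Apos: "A > 0" using gpos by (simp add: A_def divide_neg_pos)
    define \<theta> where "\<theta> = A / (2 * (\<bar>NE\<bar> + A))"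
    have th: "0 < \<theta>" "\<theta> \<le> 1" "\<theta> \<le> 1/2" using Apos by (simp_all add: \<theta>_def field_simps)
    have thN: "\<theta> * \<bar>NE\<bar> < A / 2"
    proof -
      have "\<theta> * \<bar>NE\<bar> = A * \<bar>NE\<bar> / (2 * (\<bar>NE\<bar> + A))" by (simp add: \<theta>_def)
      also have "\<dots> < A / 2" using Apos by (simp add: field_simps)
      finally show ?thesis .
    qed
    define s where "s = p0 - \<theta> *\<^sub>R (p0 - (Ex, Ey))"
    have sint: "s \<in> interior C'" unfolding s_def using mem_interior_convex_shrink[OF cv z'int p0C th(1) th(2)] .
    have fg: "1 / g - \<theta> / g = (1 - \<theta>) / g" by (simp add: diff_divide_distrib)
    have "fst s = (1 / g) *\<^sub>R lam - \<theta> *\<^sub>R ((1 / g) *\<^sub>R lam - Ex)" by (simp add: s_def p0_def)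
    also have "\<dots> = (1 / g - \<theta> / g) *\<^sub>R lam + \<theta> *\<^sub>R Ex" by (simp add: algebra_simps)
    finally have fs: "fst s = ((1 - \<theta>) / g) *\<^sub>R lam + \<theta> *\<^sub>R Ex" unfolding fg .
    have "snd s = (1 / g) *\<^sub>R \<beta> - \<theta> *\<^sub>R ((1 / g) *\<^sub>R \<beta> - Ey)" by (simp add: s_def p0_def)
    also have "\<dots> = (1 / g - \<theta> / g) *\<^sub>R \<beta> + \<theta> *\<^sub>R Ey" by (simp add: algebra_simps)
    finally have ss: "snd s = ((1 - \<theta>) / g) *\<^sub>R \<beta> + \<theta> *\<^sub>R Ey" unfolding fg .
    have bb: "\<beta> \<bullet> \<beta> = 1" using b by (simp add: norm_eq_sqrt_inner)
    have slE': "sl Ex Ey = lam \<bullet> Ex - \<beta> \<bullet> Ey" by (simp add: sl_def mu0 gg)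
    define r where "r = (1 - \<theta>) / g"
    have "fst s \<bullet> fst s - snd s \<bullet> snd s = 2 * r * \<theta> * (lam \<bullet> Ex - \<beta> \<bullet> Ey) + \<theta>^2 * NE"
      unfolding fs ss NE_def r_def[symmetric] by (simp add: inner_add inner_commute ll bb power2_eq_square algebra_simps)
    also have "\<dots> = \<theta> * (\<theta> * NE - 2 * (1 - \<theta>) * A)"
      using gpos by (simp add: slE'[symmetric] A_def r_def power2_eq_square field_simps)
    also have "\<dots> < 0"
    proof -
      have "\<theta> * NE \<le> \<theta> * \<bar>NE\<bar>" using th by (simp add: mult_left_mono)
      moreover have "A \<le> 2 * (1 - \<theta>) * A" using th Apos by (simp add: algebra_simps)
      ultimately have "\<theta> * NE - 2 * (1 - \<theta>) * A < 0" using thN Apos by linarith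
      then show ?thesis using th by (simp add: mult_pos_neg)
    qed
    finally have "norm (fst s) < norm (snd s)" by (intro norm_lt_inner) simp
    moreover have "s \<in> Hs"
    proof -
      have "a \<bullet> fst s + d \<bullet> snd s = ((1 - \<theta>) / g) * (c + d \<bullet> \<beta>) + \<theta> * (a \<bullet> Ex + d \<bullet> Ey)"
        unfolding fs ss by (simp add: inner_add_right cal algebra_simps)
      also have "\<dots> = -1" using gpos HE by (simp add: g_def field_simps)
      finally show ?thesis by (cases s) (simp add: Hs_def)
    qed
    ultimately show ?thesis using sint by blast
  next
    case False
    then have B: "c + d \<bullet> \<beta> \<ge> 0" by simp
    define k where "k = kk \<beta>"
    have kpos: "k > 0" using kk_pos[OF b] by (simp add: k_def)
    define D where "D = Dx \<beta>"
    define W where "W = D \<bullet> Ex - \<beta> \<bullet> Ey"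
    have kW: "k * W = sl Ex Ey"
    proof -
      have dE: "d \<bullet> Ey = -1 - a \<bullet> Ex" using HE by linarith
      have "k * W = lam \<bullet> Ex - m * (a \<bullet> Ex) - k * (\<beta> \<bullet> Ey)"
        using kpos by (simp add: W_def D_def Dx_def k_def[symmetric] m_def[symmetric] inner_diff_left algebra_simps)
      also have "\<dots> = sl Ex Ey"
        by (simp add: sl_def gg_def k_def[symmetric] m_def[symmetric] inner_diff_left dE algebra_simps)
      finally show ?thesis .
    qed
    have Wneg: "W < 0"
    proof -
      have "k * W < 0" using kW slE slz by simp
      then show ?thesis using kpos by (simp add: mult_less_0_iff)
    qed
    define \<tau> where "\<tau> = (\<bar>NE\<bar> + 1) / (2 * \<eta> * (- W))"
    have "2 * \<eta> * (- W) > 0" using Wneg eta by (intro mult_pos_pos) auto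
    then have tpos: "\<tau> > 0" unfolding \<tau>_def by (intro divide_pos_pos) auto
    have tW: "2 * \<eta> * \<tau> * W = - (\<bar>NE\<bar> + 1)" using Wneg eta by (simp add: \<tau>_def field_simps)
    define P where "P = (x0, 0) + \<tau> *\<^sub>R (D, \<beta>)"
    have Pint: "P \<in> interior C'" using rec_int[OF b B q0(2)] tpos interior_mono[OF sub]
      by (auto simp: P_def D_def)
    define s where "s = z - \<eta> *\<^sub>R (z - P)"
    have sint: "s \<in> interior C'" unfolding s_def using mem_interior_convex_shrink[OF cv Pint zC eta(1) eta(2)] .
    have fs: "fst s = Ex + (\<eta> * \<tau>) *\<^sub>R D" by (simp add: s_def P_def z Ex_def algebra_simps)
    have ss: "snd s = Ey + (\<eta> * \<tau>) *\<^sub>R \<beta>" by (simp add: s_def P_def z Ey_def algebra_simps)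
    have bb: "\<beta> \<bullet> \<beta> = 1" using b by (simp add: norm_eq_sqrt_inner)
    have DD: "D \<bullet> D = 1" using Dx_norm[OF b] by (simp add: D_def)
    have "fst s \<bullet> fst s - snd s \<bullet> snd s = NE + 2 * \<eta> * \<tau> * W"
      unfolding fs ss NE_def W_def by (simp add: inner_add inner_commute bb DD power2_eq_square algebra_simps)
    also have "\<dots> < 0" unfolding tW by simp
    finally have "norm (fst s) < norm (snd s)" by (intro norm_lt_inner) simp
    moreover have "s \<in> Hs"
    proof -
      have "a \<bullet> fst s + d \<bullet> snd s = (a \<bullet> Ex + d \<bullet> Ey) + (\<eta> * \<tau>) * (a \<bullet> D + d \<bullet> \<beta>)"
        unfolding fs ss by (simp add: inner_add_right algebra_simps)
      also have "\<dots> = -1" using HE Dx_H[OF b B] by (simp add: D_def)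
      finally show ?thesis by (cases s) (simp add: Hs_def)
    qed
    ultimately show ?thesis using sint by blast
  qed
qed

lemma contra:
  assumes "s \<in> interior C'" "s \<in> Hs" "norm (fst s) < norm (snd s)" "S_free_wrt Ss Hs C'"
  shows False
proof -
  obtain x y where s: "s = (x, y)" by (cases s)
  have "s \<in> Ss" using assms(2,3) by (simp add: s Ss_def Hs_def)
  moreover have "s \<in> top_of_set Hs interior_of (C' \<inter> Hs)"
    unfolding interior_of_def
  proof (intro CollectI exI conjI)
    show "openin (top_of_set Hs) (Hs \<inter> interior C')" by (intro openin_open_Int) simp
    show "s \<in> Hs \<inter> interior C'" using assms(1,2) by simp
    show "Hs \<inter> interior C' \<subseteq> C' \<inter> Hs" using interior_subset by blast
  qed
  ultimately show False using assms(2,4) by (auto simp: S_free_wrt_def)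
qed

lemma Cs_max:
  assumes "convex C'" "Cs \<subseteq> C'" "S_free_wrt Ss Hs C'"
  shows "C' \<inter> Hs \<subseteq> Cs \<inter> Hs"
proof
  fix z assume z: "z \<in> C' \<inter> Hs"
  show "z \<in> Cs \<inter> Hs"
  proof (rule ccontr)
    assume "z \<notin> Cs \<inter> Hs"
    then have "z \<notin> Cs" using z by blast
    then obtain s where "s \<in> interior C'" "s \<in> Hs" "norm (fst s) < norm (snd s)"
      using max_main[OF assms(1,2)] z by blast
    then show False using contra assms(3) by blast
  qed
qed

end

theorem theorem10:
  fixes a lam :: "'n::euclidean_space" and d :: "'m::euclidean_space"
  assumes "norm a = 1" and "norm d < 1" and "norm lam = 1"
    and "lam \<noteq> a" and "lam \<noteq> - a"
  defines "H \<equiv> {(x :: 'n, y :: 'm). a \<bullet> x + d \<bullet> y = -1}"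
    and "S \<equiv> {(x :: 'n, y :: 'm). norm x \<le> norm y \<and> a \<bullet> x + d \<bullet> y \<le> 0}"
    and "C \<equiv> {(x :: 'n, y :: 'm). \<forall>\<beta>::'m. norm \<beta> = 1 \<longrightarrow>
               - (lam \<bullet> x) + grad (phi lam a d) \<beta> \<bullet> y \<le> rfun lam a d \<beta>}"
  shows "max_S_free_wrt S H C \<and>
         (\<forall>xb yb. (xb, yb) \<in> H \<and> norm xb > norm yb \<and> lam = xb /\<^sub>R norm xb
             \<longrightarrow> (xb, yb) \<in> interior C)"
proof -
  interpret cdat a lam d using assms(1-5) by unfold_locales
  have CC: "C = Cs" unfolding C_def Cs_def using grad_phi rfun_eq by simp
  have HH: "H = Hs" unfolding H_def Hs_def ..
  have SS: "S = Ss" unfolding S_def Ss_def ..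
  have "max_S_free_wrt S H C"
    unfolding CC HH SS max_S_free_wrt_def
    using Cs_closed Cs_convex Cs_free Cs_max by blast
  moreover have "(xb, yb) \<in> interior C" if "(xb, yb) \<in> H" "norm xb > norm yb" "lam = xb /\<^sub>R norm xb" for xb yb
  proof -
    have "norm xb > 0" using that(2) by (meson le_less_trans norm_ge_zero)
    then have "lam \<bullet> xb = norm xb" using that(3) by (simp add: power2_norm_eq_inner[symmetric] power2_eq_square)
    then have "lam \<bullet> xb - norm yb > 0" using that(2) by simp
    then show ?thesis unfolding CC by (rule int_pt)
  qed
  ultimately show ?thesis by blast
qed

end
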